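(* Let $\alpha,\beta,\gamma\in\mathbb{Z}_2^n$ and $a\in\mathbb{Z}_2$. Then $$\mathrm{padp}_{a,0}(\alpha,\beta,\gamma)+\mathrm{padp}_{a\oplus1,1}(\alpha,\beta,\gamma)\le\mathrm{padp}_{0,0}(\alpha,\alpha,0)+\mathrm{padp}_{1,1}(\alpha,\alpha,0).$$
   Context: Indices $0,\dots,7$ are identified with $\mathbb{Z}_2^3$ via $(p_0,p_1,p_2)\leftrightarrow4p_0+2p_1+p_2$; $e_0,\dots,e_7$ are the standard basis row vectors of $\mathbb{Q}^8$. $A_0$ is $\frac14$ times the $8\times8$ matrix with rows $(4,0,0,1,0,1,1,0)$, $(0,0,0,1,0,1,0,0)$, $(0,0,0,1,0,0,1,0)$, $(0,0,0,1,0,0,0,0)$, $(0,0,0,0,0,1,1,0)$, $(0,0,0,0,0,1,0,0)$, $(0,0,0,0,0,0,1,0)$, $(0,\dots,0)$, and $(A_k)_{i,j}=(A_0)_{i\oplus k,j\oplus k}$. For $\alpha,\beta,\gamma\in\mathbb{Z}_2^n$ let $\omega_i=4\alpha_i+2\beta_i+\gamma_i$. With $L_{0,0}=(1,1,0,0,0,0,0,0)$, $L_{0,1}=(0,0,1,1,0,0,0,0)$, $L_{1,0}=(0,0,0,0,1,1,0,0)$, $L_{1,1}=(0,0,0,0,0,0,1,1)$, $\mathrm{padp}_{a,b}(\alpha,\beta,\gamma)=L_{a,b}A_{\omega_0}\cdots A_{\omega_{n-1}}e_0^T$. *)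

theory Defs
  imports Complex_Main
begin

text \<open>Elements of Z_2 are booleans (True = 1); elements of Z_2^n are boolean lists of length n.
  Indices 0..7 are natural numbers; (p0,p1,p2) corresponds to 4 p0 + 2 p1 + p2,
  and componentwise XOR on Z_2^3 is bitwise xor on the index.\<close>

definition b2n :: "bool \<Rightarrow> nat" where "b2n b = (if b then 1 else 0)"

definition A0rows :: "nat list list" where
  "A0rows = [[4,0,0,1,0,1,1,0],
             [0,0,0,1,0,1,0,0],
             [0,0,0,1,0,0,1,0],
             [0,0,0,1,0,0,0,0],
             [0,0,0,0,0,1,1,0],
             [0,0,0,0,0,1,0,0],
             [0,0,0,0,0,0,1,0],
             [0,0,0,0,0,0,0,0]]"

definition A0 :: "nat \<Rightarrow> nat \<Rightarrow> rat" where
  "A0 i j = rat_of_nat (A0rows ! i ! j) / 4"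

definition Amat :: "nat \<Rightarrow> nat \<Rightarrow> nat \<Rightarrow> rat" where
  "Amat k i j = A0 (Bit_Operations.xor i k) (Bit_Operations.xor j k)"

definition mulv :: "(nat \<Rightarrow> nat \<Rightarrow> rat) \<Rightarrow> (nat \<Rightarrow> rat) \<Rightarrow> nat \<Rightarrow> rat" where
  "mulv M v = (\<lambda>i. \<Sum>j<8. M i j * v j)"

definition e0 :: "nat \<Rightarrow> rat" where "e0 j = (if j = 0 then 1 else 0)"

definition omegas :: "bool list \<Rightarrow> bool list \<Rightarrow> bool list \<Rightarrow> nat list" where
  "omegas \<alpha> \<beta> \<gamma> = map (\<lambda>(a,b,c). 4 * b2n a + 2 * b2n b + b2n c) (zip \<alpha> (zip \<beta> \<gamma>))"

definition prodvec :: "nat list \<Rightarrow> nat \<Rightarrow> rat" where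
  "prodvec ws = foldr (\<lambda>w v. mulv (Amat w) v) ws e0"

definition Lvec :: "bool \<Rightarrow> bool \<Rightarrow> nat \<Rightarrow> rat" where
  "Lvec a b j = (if j div 2 = 2 * b2n a + b2n b \<and> j < 8 then 1 else 0)"

definition padp :: "bool \<Rightarrow> bool \<Rightarrow> bool list \<Rightarrow> bool list \<Rightarrow> bool list \<Rightarrow> rat" where
  "padp a b \<alpha> \<beta> \<gamma> = (\<Sum>j<8. Lvec a b j * prodvec (omegas \<alpha> \<beta> \<gamma>) j)"

end

theory Submission
  imports Defs
begin

lemma mulv8: "mulv M v i = M i 0 * v 0 + M i 1 * v 1 + M i 2 * v 2 + M i 3 * v 3 + M i 4 * v 4 + M i 5 * v 5 + M i 6 * v 6 + M i 7 * v 7"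
  by (simp add: mulv_def eval_nat_numeral sum.lessThan_Suc)

definition Inv :: "(nat \<Rightarrow> rat) \<Rightarrow> (nat \<Rightarrow> rat) \<Rightarrow> bool" where
  "Inv u r \<longleftrightarrow>
     0 \<le> u 0 \<and> 0 \<le> u 1 \<and> 0 \<le> u 2 \<and> 0 \<le> u 3 \<and> 0 \<le> u 4 \<and> 0 \<le> u 5 \<and> 0 \<le> u 6 \<and> 0 \<le> u 7 \<and>
     0 \<le> r 0 \<and> 0 \<le> r 2 \<and> 0 \<le> r 4 \<and> 0 \<le> r 6 \<and>
     r 1 = 0 \<and> r 3 = 0 \<and> r 5 = 0 \<and> r 7 = 0 \<and>
     u 0 + u 3 \<le> r 0 \<and> u 1 + u 2 \<le> r 0 \<and> u 4 + u 7 \<le> r 6 \<and> u 5 + u 6 \<le> r 6 \<and>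
     u 0 + u 1 + u 6 + u 7 \<le> r 0 + r 6 \<and> u 2 + u 3 + u 4 + u 5 \<le> r 0 + r 6"


lemma Inv_base: "Inv e0 e0"
  by (simp add: Inv_def e0_def)

lemma Inv_step_w:
  assumes "Inv u r" and "w \<in> {0,1,2,3,4,5,6,7::nat}"
  shows "Inv (mulv (Amat w) u) (mulv (Amat (if w < 4 then 0 else 6)) r)"
  using assms(2)
  apply (simp only: insert_iff empty_iff simp_thms)
  apply (elim disjE)
  using assms(1) by (simp_all add: Inv_def mulv8 Amat_def A0_def A0rows_def)

lemma omegas_Cons: "omegas (x#xs) (y#ys) (z#zs) = (4 * b2n x + 2 * b2n y + b2n z) # omegas xs ys zs"
  by (simp add: omegas_def)

lemma prodvec_Cons: "prodvec (w#ws) = mulv (Amat w) (prodvec ws)"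
  by (simp add: prodvec_def)

lemma Inv_main:
  "length \<alpha> = n \<Longrightarrow> length \<beta> = n \<Longrightarrow> length \<gamma> = n \<Longrightarrow>
   Inv (prodvec (omegas \<alpha> \<beta> \<gamma>)) (prodvec (omegas \<alpha> \<alpha> (replicate n False)))"
proof (induction n arbitrary: \<alpha> \<beta> \<gamma>)
  case 0
  then show ?case by (simp add: omegas_def prodvec_def Inv_base)
next
  case (Suc n)
  then obtain x xs y ys z zs where e: "\<alpha> = x#xs" "\<beta> = y#ys" "\<gamma> = z#zs"
    by (metis length_Suc_conv)
  with Suc.prems have l: "length xs = n" "length ys = n" "length zs = n" by auto
  have IH: "Inv (prodvec (omegas xs ys zs)) (prodvec (omegas xs xs (replicate n False)))"
    using Suc.IH[OF l] .
  define w where "w = 4 * b2n x + 2 * b2n y + b2n z"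
  have w: "w \<in> {0,1,2,3,4,5,6,7::nat}" and k: "(if w < 4 then 0 else 6) = 4 * b2n x + 2 * b2n x + b2n False"
    unfolding w_def by (cases x; cases y; cases z; simp add: b2n_def)+
  have "Inv (mulv (Amat w) (prodvec (omegas xs ys zs)))
            (mulv (Amat (if w < 4 then 0 else 6)) (prodvec (omegas xs xs (replicate n False))))"
    by (rule Inv_step_w[OF IH w])
  then have "Inv (mulv (Amat w) (prodvec (omegas xs ys zs)))
            (mulv (Amat (4 * b2n x + 2 * b2n x + b2n False)) (prodvec (omegas xs xs (replicate n False))))"
    by (simp only: k)
  then show ?case unfolding e w_def by (simp add: omegas_Cons prodvec_Cons)
qed

lemma padp8: "padp a b \<alpha> \<beta> \<gamma> = (\<Sum>j<8. Lvec a b j * prodvec (omegas \<alpha> \<beta> \<gamma>) j)"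
  by (simp add: padp_def)

theorem lemma3:
  fixes \<alpha> \<beta> \<gamma> :: "bool list" and a :: bool and n :: nat
  assumes "length \<alpha> = n" and "length \<beta> = n" and "length \<gamma> = n"
  shows "padp a False \<alpha> \<beta> \<gamma> + padp (\<not> a) True \<alpha> \<beta> \<gamma>
           \<le> padp False False \<alpha> \<alpha> (replicate n False) + padp True True \<alpha> \<alpha> (replicate n False)"
proof -
  define u where "u = prodvec (omegas \<alpha> \<beta> \<gamma>)"
  define r where "r = prodvec (omegas \<alpha> \<alpha> (replicate n False))"
  have I: "Inv u r" unfolding u_def r_def using Inv_main assms by blast
  have s: "\<And>f::nat\<Rightarrow>rat. (\<Sum>j<8. f j) = f 0 + f 1 + f 2 + f 3 + f 4 + f 5 + f 6 + f 7"
    by (simp add: eval_nat_numeral sum.lessThan_Suc)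
  show ?thesis
    unfolding padp_def u_def[symmetric] r_def[symmetric] s
    using I by (cases a; simp add: Lvec_def b2n_def Inv_def)
qed

end
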